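(* Let $\mathbf A$ be a finite algebra with a strongly abelian congruence $\alpha$ and let $a,b\in A$ with $(a,b)\in\alpha$. Then $|F_{\mathbf A,ab}(n)|\in O(n^k)$ where $k=\lfloor\log_2|A|\rfloor$.
   Context: $\mathrm{Clo}_n(\mathbf A)$ is the set of $n$-ary term operations of $\mathbf A$, and $F_{\mathbf A,ab}(n)=\{t|_{\{a,b\}^n}\colon\{a,b\}^n\to A\mid t\in\mathrm{Clo}_n(\mathbf A)\}$. A congruence $\alpha$ of $\mathbf A$ is strongly abelian if for every $k\ge1$, every $t\in\mathrm{Clo}_k(\mathbf A)$ and all $x_1,\dots,x_k,y_1,\dots,y_k,z_2,\dots,z_k\in A$ with $(x_i,y_i)\in\alpha$ for $1\le i\le k$ and $(y_i,z_i)\in\alpha$ for $2\le i\le k$, $t(x_1,\dots,x_k)=t(y_1,\dots,y_k)$ implies $t(x_1,z_2,\dots,z_k)=t(y_1,z_2,\dots,z_k)$. *)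

theory Defs
  imports Complex_Main "HOL-Library.Landau_Symbols" "HOL-Library.FuncSet"
begin

definition is_algebra :: "'a set \<Rightarrow> ('f \<Rightarrow> nat) \<Rightarrow> ('f \<Rightarrow> 'a list \<Rightarrow> 'a) \<Rightarrow> bool" where
  "is_algebra A ar op \<longleftrightarrow> A \<noteq> {} \<and>
     (\<forall>f xs. length xs = ar f \<and> set xs \<subseteq> A \<longrightarrow> op f xs \<in> A)"

text \<open>n-ary term operations (as functions on argument lists; only their values on
  lists of length n over A matter).\<close>
inductive_set Clo :: "('f \<Rightarrow> nat) \<Rightarrow> ('f \<Rightarrow> 'a list \<Rightarrow> 'a) \<Rightarrow> nat \<Rightarrow> ('a list \<Rightarrow> 'a) set"
  for ar op n where
  proj: "i < n \<Longrightarrow> (\<lambda>xs. xs ! i) \<in> Clo ar op n"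
| comp: "length ts = ar f \<Longrightarrow> (\<forall>t\<in>set ts. t \<in> Clo ar op n)
          \<Longrightarrow> (\<lambda>xs. op f (map (\<lambda>t. t xs) ts)) \<in> Clo ar op n"

definition tuples :: "'a set \<Rightarrow> nat \<Rightarrow> 'a list set" where
  "tuples B n = {xs. length xs = n \<and> set xs \<subseteq> B}"

definition F_ab :: "('f \<Rightarrow> nat) \<Rightarrow> ('f \<Rightarrow> 'a list \<Rightarrow> 'a) \<Rightarrow> 'a \<Rightarrow> 'a \<Rightarrow> nat \<Rightarrow> ('a list \<Rightarrow> 'a) set" where
  "F_ab ar op a b n = (\<lambda>t. restrict t (tuples {a, b} n)) ` Clo ar op n"

definition is_congruence :: "'a set \<Rightarrow> ('f \<Rightarrow> nat) \<Rightarrow> ('f \<Rightarrow> 'a list \<Rightarrow> 'a) \<Rightarrow> ('a \<times> 'a) set \<Rightarrow> bool" where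
  "is_congruence A ar op \<alpha> \<longleftrightarrow> equiv A \<alpha> \<and>
     (\<forall>f xs ys. length xs = ar f \<and> length ys = ar f \<and> set xs \<subseteq> A \<and> set ys \<subseteq> A \<and>
        (\<forall>i < ar f. (xs ! i, ys ! i) \<in> \<alpha>) \<longrightarrow> (op f xs, op f ys) \<in> \<alpha>)"

definition strongly_abelian :: "'a set \<Rightarrow> ('f \<Rightarrow> nat) \<Rightarrow> ('f \<Rightarrow> 'a list \<Rightarrow> 'a) \<Rightarrow> ('a \<times> 'a) set \<Rightarrow> bool" where
  "strongly_abelian A ar op \<alpha> \<longleftrightarrow>
     (\<forall>k \<ge> 1. \<forall>t \<in> Clo ar op k. \<forall>xs ys zs.
        xs \<in> tuples A k \<and> ys \<in> tuples A k \<and> zs \<in> tuples A k \<and>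
        (\<forall>i < k. (xs ! i, ys ! i) \<in> \<alpha>) \<and>
        (\<forall>i. 1 \<le> i \<and> i < k \<longrightarrow> (ys ! i, zs ! i) \<in> \<alpha>) \<and>
        t xs = t ys \<longrightarrow> t (xs ! 0 # tl zs) = t (ys ! 0 # tl zs))"

end

theory Submission
  imports Defs
begin

lemma Clo_remap:
  assumes "t \<in> Clo ar op n" "\<forall>j<n. \<sigma> j < m"
  shows "(\<lambda>xs. t (map (\<lambda>j. xs ! \<sigma> j) [0..<n])) \<in> Clo ar op m"
  using assms
proof (induction rule: Clo.induct)
  case (proj i)
  have "(\<lambda>xs. map (\<lambda>j. xs ! \<sigma> j) [0..<n] ! i) = (\<lambda>xs. xs ! \<sigma> i)" using proj by auto
  then show ?case using proj Clo.proj[of "\<sigma> i" m ar op] by simp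
next
  case (comp ts f)
  let ?r = "\<lambda>t. \<lambda>xs. t (map (\<lambda>j. xs ! \<sigma> j) [0..<n])"
  have "(\<lambda>xs. op f (map (\<lambda>t. t xs) (map ?r ts))) \<in> Clo ar op m"
    apply (rule Clo.comp) using comp by auto
  then show ?case by (simp add: comp_def)
qed

lemma Clo_closed:
  assumes "is_algebra A ar op" "t \<in> Clo ar op n"
  shows "\<forall>xs \<in> tuples A n. t xs \<in> A"
  using assms(2)
proof (induction rule: Clo.induct)
  case (proj i) then show ?case by (auto simp: tuples_def)
next
  case (comp ts f) show ?case
  proof
    fix xs assume "xs \<in> tuples A n"
    then have "set (map (\<lambda>t. t xs) ts) \<subseteq> A" using comp by auto
    then show "op f (map (\<lambda>t. t xs) ts) \<in> A" using assms(1) comp(1) unfolding is_algebra_def by auto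
  qed
qed

lemma key:
  assumes sa: "strongly_abelian A ar op \<alpha>"
   and alpha: "\<And>p q. p \<in> {a,b} \<Longrightarrow> q \<in> {a,b} \<Longrightarrow> (p,q) \<in> \<alpha>"
   and AB: "a \<in> A" "b \<in> A"
   and t: "t \<in> Clo ar op n" and i: "i < n"
   and u: "u \<in> tuples {a,b} n" and v: "v \<in> {a,b}" and neq: "t u \<noteq> t (u[i:=v])"
   and x: "x \<in> tuples {a,b} n" and y: "y \<in> tuples {a,b} n" and xy: "x!i \<noteq> y!i"
  shows "t x \<noteq> t y"
proof
  assume eq: "t x = t y"
  define \<sigma> where "\<sigma> j = (if j = 0 then i else if j = i then 0 else j)" for j
  define pm where "pm xs = map (\<lambda>j. xs ! \<sigma> j) [0..<n]" for xs :: "'a list"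
  have \<sigma>_lt: "\<forall>j<n. \<sigma> j < n" using i by (auto simp: \<sigma>_def)
  have \<sigma>\<sigma>: "\<sigma> (\<sigma> j) = j" for j by (auto simp: \<sigma>_def)
  define t' where "t' = (\<lambda>xs. t (pm xs))"
  have t': "t' \<in> Clo ar op n" unfolding t'_def pm_def by (rule Clo_remap[OF t \<sigma>_lt])
  have pmpm: "pm (pm xs) = xs" if "length xs = n" for xs
    using that \<sigma>_lt by (intro nth_equalityI) (auto simp: pm_def \<sigma>\<sigma>)
  have pm_tup: "pm xs \<in> tuples {a,b} n" if "xs \<in> tuples {a,b} n" for xs
  proof -
    have "length xs = n" "set xs \<subseteq> {a,b}" using that by (auto simp: tuples_def)
    moreover have "xs ! \<sigma> j \<in> set xs" if "j < n" for j using that \<sigma>_lt \<open>length xs = n\<close> by simp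
    ultimately show ?thesis unfolding tuples_def pm_def by (auto; blast)
  qed
  have n1: "n \<ge> 1" using i by simp
  have tupA: "tuples {a,b} n \<subseteq> tuples A n" using AB by (auto simp: tuples_def)
  have inab: "xs ! j \<in> {a,b}" if "xs \<in> tuples {a,b} n" "j < n" for xs j
    using that unfolding tuples_def by (auto dest!: nth_mem)
  have lens: "length x = n" "length y = n" "length u = n" using x y u by (auto simp: tuples_def)
  have "t' (pm x ! 0 # tl (pm u)) = t' (pm y ! 0 # tl (pm u))"
  proof (rule sa[unfolded strongly_abelian_def, rule_format, OF n1 t', of "pm x" "pm y" "pm u"], intro conjI)
    show "pm x \<in> tuples A n" "pm y \<in> tuples A n" "pm u \<in> tuples A n"
      using pm_tup x y u tupA by auto
    show "\<forall>j<n. (pm x ! j, pm y ! j) \<in> \<alpha>"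
      using alpha inab pm_tup x y by blast
    show "\<forall>j. 1 \<le> j \<and> j < n \<longrightarrow> (pm y ! j, pm u ! j) \<in> \<alpha>"
      using alpha inab pm_tup u y by blast
    show "t' (pm x) = t' (pm y)" unfolding t'_def using pmpm lens eq by simp
  qed
  moreover have "(pm w ! 0 # tl (pm u)) = pm (u[i:=w!i])" if "length w = n" for w
  proof (rule nth_equalityI)
    show "length (pm w ! 0 # tl (pm u)) = length (pm (u[i := w ! i]))"
      using n1 by (simp add: pm_def)
    fix j assume "j < length (pm w ! 0 # tl (pm u))"
    then have j: "j < n" using n1 by (simp add: pm_def)
    show "(pm w ! 0 # tl (pm u)) ! j = pm (u[i := w ! i]) ! j"
    proof (cases j)
      case 0 then show ?thesis using n1 i lens by (simp add: pm_def \<sigma>_def)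
    next
      case (Suc j')
      then show ?thesis using j i lens \<sigma>_lt by (auto simp: pm_def nth_tl \<sigma>_def)
    qed
  qed
  ultimately have "t' (pm (u[i:=x!i])) = t' (pm (u[i:=y!i]))" using lens by simp
  then have E: "t (u[i:=x!i]) = t (u[i:=y!i])" unfolding t'_def using pmpm lens by simp
  have "x!i \<in> {a,b}" "y!i \<in> {a,b}" "u!i \<in> {a,b}" using inab x y u i by auto
  moreover have "v \<noteq> u!i" using neq by auto
  ultimately have "(x!i = u!i \<and> y!i = v) \<or> (y!i = u!i \<and> x!i = v)" using v xy by auto
  then show False
  proof
    assume h: "x!i = u!i \<and> y!i = v"
    then have "u[i:=x!i] = u" by simp
    then show False using E neq h by simp
  next
    assume h: "y!i = u!i \<and> x!i = v"
    then have "u[i:=y!i] = u" by simp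
    then show False using E neq h by simp
  qed
qed

lemma agree:
  assumes x: "x \<in> tuples {a,b} n" and y: "y \<in> tuples {a,b} n"
    and ag: "\<forall>i\<in>{i. i < n \<and> (\<exists>u\<in>tuples {a,b} n. \<exists>v\<in>{a,b}. g u \<noteq> g (u[i:=v]))}. x!i = y!i"
  shows "g x = g y"
proof -
  define z where "z m = map (\<lambda>i. if i < m then y!i else x!i) [0..<n]" for m
  have lens: "length x = n" "length y = n" using x y by (auto simp: tuples_def)
  have inab: "xs ! j \<in> {a,b}" if "xs \<in> tuples {a,b} n" "j < n" for xs j
    using that unfolding tuples_def by (auto dest!: nth_mem)
  have zB: "z m \<in> tuples {a,b} n" for m
    using inab[OF x] inab[OF y] unfolding z_def tuples_def by (auto; blast)
  have "g x = g (z m)" for m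
  proof (induction m)
    case 0
    have "z 0 = x" using lens by (intro nth_equalityI) (auto simp: z_def)
    then show ?case by simp
  next
    case (Suc m)
    show ?case
    proof (cases "m < n")
      case False
      then have "z (Suc m) = z m" unfolding z_def by (intro map_cong) auto
      then show ?thesis using Suc by simp
    next
      case True
      have zs: "z (Suc m) = (z m)[m := y!m]"
        using True lens by (intro nth_equalityI) (auto simp: z_def nth_list_update)
      show ?thesis
      proof (cases "\<exists>u\<in>tuples {a,b} n. \<exists>v\<in>{a,b}. g u \<noteq> g (u[m:=v])")
        case True2: True
        then have "x!m = y!m" using ag True by auto
        then have "z m ! m = y!m" using True by (simp add: z_def)
        then have "(z m)[m := y!m] = z m" by (metis list_update_id)
        then show ?thesis using Suc zs by simp
      next
        case False
        then have "g (z m) = g ((z m)[m := y!m])" using zB inab[OF y True] by blast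
        then show ?thesis using Suc zs by simp
      qed
    qed
  qed
  moreover have "z n = y" using lens by (intro nth_equalityI) (auto simp: z_def)
  ultimately show ?thesis by metis
qed

lemma log_bound:
  assumes "2 ^ c \<le> (m::nat)"
  shows "c \<le> nat \<lfloor>log 2 (real m)\<rfloor>"
proof -
  have "real c \<le> log 2 (real m)"
    by (rule le_log_of_power) (use assms in \<open>simp_all add: of_nat_le_iff[symmetric]\<close>)
  then have "int c \<le> \<lfloor>log 2 (real m)\<rfloor>" by (simp add: le_floor_iff)
  then show ?thesis by simp
qed

lemma count:
  assumes alg: "is_algebra A ar op" and fin: "finite A"
    and sa: "strongly_abelian A ar op \<alpha>"
    and alpha: "\<And>p q. p \<in> {a,b} \<Longrightarrow> q \<in> {a,b} \<Longrightarrow> (p,q) \<in> \<alpha>"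
    and AB: "a \<in> A" "b \<in> A"
  defines "k \<equiv> nat \<lfloor>log 2 (real (card A))\<rfloor>"
  shows "card (F_ab ar op a b n) \<le> card {E. E \<subseteq> {..<n} \<and> card E \<le> k} * card A ^ (2^k)"
proof -
  define B where "B = tuples {a,b} n"
  define Eg where "Eg g = {i. i < n \<and> (\<exists>u\<in>B. \<exists>v\<in>{a,b}. g u \<noteq> g (u[i:=v]))}" for g :: "'a list \<Rightarrow> 'a"
  define xe where "xe E e = map (\<lambda>i. if i \<in> E then e i else a) [0..<n]" for E and e :: "nat \<Rightarrow> 'a"
  define P where "P E = PiE E (\<lambda>_. {a,b})" for E :: "nat set"
  define \<Phi> where "\<Phi> g = (Eg g, \<lambda>e\<in>P (Eg g). g (xe (Eg g) e))" for g
  define I where "I = {E. E \<subseteq> {..<n} \<and> card E \<le> k}"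
  let ?F = "F_ab ar op a b n"
  have inab: "xs ! j \<in> {a,b}" if "xs \<in> B" "j < n" for xs j
    using that unfolding B_def tuples_def by (auto dest!: nth_mem)
  have xeB: "xe E e \<in> B" if "e \<in> P E" for E e
    using that unfolding xe_def B_def tuples_def P_def by (auto simp: PiE_iff)
  have xe_nth: "xe E e ! i = (if i \<in> E then e i else a)" if "i < n" for E e i
    using that by (simp add: xe_def)
  have Eg_sub: "Eg g \<subseteq> {..<n}" for g by (auto simp: Eg_def)
  have finE: "finite (Eg g)" for g using Eg_sub finite_subset by blast
  have det: "g x = g (xe (Eg g) (restrict (nth x) (Eg g)))" if "x \<in> B" for g x
  proof (rule agree[of x a b n _ g])
    show "x \<in> tuples {a,b} n" using that B_def by simp
    have "restrict (nth x) (Eg g) \<in> P (Eg g)" using inab[OF that] Eg_sub by (auto simp: P_def)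
    then show "xe (Eg g) (restrict (nth x) (Eg g)) \<in> tuples {a,b} n" using xeB B_def by simp
    show "\<forall>i\<in>{i. i < n \<and> (\<exists>u\<in>tuples {a, b} n. \<exists>v\<in>{a, b}. g u \<noteq> g (u[i := v]))}.
        x ! i = xe (Eg g) (restrict ((!) x) (Eg g)) ! i"
      using xe_nth by (auto simp: Eg_def B_def)
  qed
  have Fform: "\<exists>t\<in>Clo ar op n. g = restrict t B" if "g \<in> ?F" for g
    using that by (auto simp: F_ab_def B_def)
  have inj: "inj_on \<Phi> ?F"
  proof
    fix g1 g2 assume g1: "g1 \<in> ?F" and g2: "g2 \<in> ?F" and eq: "\<Phi> g1 = \<Phi> g2"
    then have EE: "Eg g1 = Eg g2" by (simp add: \<Phi>_def)
    show "g1 = g2"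
    proof
      fix x show "g1 x = g2 x"
      proof (cases "x \<in> B")
        case True
        let ?e = "restrict (nth x) (Eg g1)"
        have eP: "?e \<in> P (Eg g1)" using inab[OF True] Eg_sub by (auto simp: P_def)
        have "(\<lambda>e\<in>P (Eg g1). g1 (xe (Eg g1) e)) = (\<lambda>e\<in>P (Eg g1). g2 (xe (Eg g1) e))"
          using eq EE by (simp add: \<Phi>_def)
        then have "g1 (xe (Eg g1) ?e) = g2 (xe (Eg g1) ?e)" using eP by (metis restrict_apply')
        then show ?thesis using det[OF True, of g1] det[OF True, of g2] EE by simp
      next
        case False
        then show ?thesis using Fform[OF g1] Fform[OF g2] by auto
      qed
    qed
  qed
  have cardE: "card (Eg g) \<le> k" if g: "g \<in> ?F" for g
  proof (cases "a = b")
    case True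
    have "Eg g = {}"
    proof -
      have "u[i:=v] = u" if "u \<in> B" "i < n" "v \<in> {a,b}" for u i v
        using inab[OF that(1,2)] that(3) True by (metis insert_absorb2 list_update_id singletonD)
      then show ?thesis by (auto simp: Eg_def)
    qed
    then show ?thesis by simp
  next
    case False
    obtain t where t: "t \<in> Clo ar op n" and gt: "g = restrict t B" using Fform[OF g] by blast
    let ?E = "Eg g"
    have "inj_on (\<lambda>e. g (xe ?E e)) (P ?E)"
    proof
      fix e1 e2 assume e1: "e1 \<in> P ?E" and e2: "e2 \<in> P ?E" and eq: "g (xe ?E e1) = g (xe ?E e2)"
      show "e1 = e2"
      proof (rule ccontr)
        assume "e1 \<noteq> e2"
        then obtain i where i: "e1 i \<noteq> e2 i" by blast
        have iE: "i \<in> ?E"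
        proof (rule ccontr)
          assume "i \<notin> ?E"
          then show False using i PiE_arb[OF e1[unfolded P_def]] PiE_arb[OF e2[unfolded P_def]] by metis
        qed
        then have "i < n" and "\<exists>u\<in>B. \<exists>v\<in>{a,b}. g u \<noteq> g (u[i:=v])" by (auto simp: Eg_def)
        then obtain u v where u: "u \<in> B" and v: "v \<in> {a,b}" and ne: "g u \<noteq> g (u[i:=v])" by blast
        have uv: "u[i:=v] \<in> B" using u v unfolding B_def tuples_def by (auto dest: set_update_subset_insert[THEN subsetD])
        have "t u \<noteq> t (u[i:=v])" using ne u uv gt by simp
        moreover have "xe ?E e1 ! i \<noteq> xe ?E e2 ! i" using xe_nth[OF \<open>i < n\<close>] iE i by simp
        ultimately have "t (xe ?E e1) \<noteq> t (xe ?E e2)"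
          using key[OF sa alpha AB t \<open>i < n\<close>, of u v "xe ?E e1" "xe ?E e2"] u v xeB e1 e2
unfolding B_def by blast
        then show False using eq gt xeB e1 e2 by simp
      qed
    qed
    moreover have "(\<lambda>e. g (xe ?E e)) ` P ?E \<subseteq> A"
    proof
      fix y assume "y \<in> (\<lambda>e. g (xe ?E e)) ` P ?E"
      then obtain e where e: "e \<in> P ?E" and y: "y = g (xe ?E e)" by blast
      have "xe ?E e \<in> tuples A n" using xeB[OF e] AB unfolding B_def tuples_def by auto
      then show "y \<in> A" using Clo_closed[OF alg t] y gt xeB[OF e] by simp
    qed
    ultimately have "card (P ?E) \<le> card A" using fin by (metis card_inj_on_le)
    moreover have "card (P ?E) = 2 ^ card ?E" using finE False by (simp add: P_def card_PiE numeral_2_eq_2)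
    ultimately show ?thesis unfolding k_def by (intro log_bound) simp
  qed
  have cardA: "card A \<ge> 1" using AB fin by (metis One_nat_def Suc_leI card_gt_0_iff empty_iff)
  have finP: "finite (P E)" if "finite E" for E using that by (simp add: P_def finite_PiE)
  have finI: "finite I" unfolding I_def by (rule finite_subset[of _ "Pow {..<n}"]) auto
  let ?S = "Sigma I (\<lambda>E. PiE (P E) (\<lambda>_. A))"
  have img: "\<Phi> ` ?F \<subseteq> ?S"
  proof
    fix p assume "p \<in> \<Phi> ` ?F"
    then obtain g where g: "g \<in> ?F" and p: "p = \<Phi> g" by blast
    obtain t where t: "t \<in> Clo ar op n" and gt: "g = restrict t B" using Fform[OF g] by blast
    have "Eg g \<in> I" using cardE[OF g] Eg_sub by (auto simp: I_def)
    moreover have "g (xe (Eg g) e) \<in> A" if "e \<in> P (Eg g)" for e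
    proof -
      have "xe (Eg g) e \<in> tuples A n" using xeB[OF that] AB unfolding B_def tuples_def by auto
      then show ?thesis using Clo_closed[OF alg t] gt xeB[OF that] by simp
    qed
    ultimately show "p \<in> ?S" using p by (auto simp: \<Phi>_def)
  qed
  have finI_el: "finite E" if "E \<in> I" for E
    using that unfolding I_def by (auto intro: finite_subset[OF _ finite_lessThan])
  have fin_each: "finite (PiE (P E) (\<lambda>_. A))" if "E \<in> I" for E
    by (rule finite_PiE[OF finP[OF finI_el[OF that]]]) (use fin in simp)
  have finS: "finite ?S" using finI fin_each by (rule finite_SigmaI)
  have "card ?F \<le> card ?S" using card_inj_on_le[OF inj img finS] .
  also have "card ?S = (\<Sum>E\<in>I. card (PiE (P E) (\<lambda>_. A)))"
    using finI fin_each by (intro card_SigmaI) auto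
  also have "\<dots> \<le> (\<Sum>E\<in>I. card A ^ (2^k))"
  proof (rule sum_mono)
    fix E assume E: "E \<in> I"
    then have fE: "finite E" by (auto simp: I_def finite_subset)
    have "card (PiE (P E) (\<lambda>_. A)) = card A ^ card (P E)" using finP[OF fE] by (simp add: card_PiE)
    also have "card (P E) \<le> 2 ^ card E" 
    proof -
      have "card {a,b} \<le> 2" by (simp add: card_insert_le_m1)
      then have "card {a,b} ^ card E \<le> 2 ^ card E" by (rule power_mono) simp
      then show ?thesis using fE by (simp add: P_def card_PiE)
    qed
    then have "card A ^ card (P E) \<le> card A ^ (2^k)"
      using E cardA by (intro power_increasing) (auto simp: I_def intro: order_trans)
    finally show "card (PiE (P E) (\<lambda>_. A)) \<le> card A ^ (2^k)" .
  qed
  also have "\<dots> = card I * card A ^ (2^k)" by simp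
  finally show ?thesis unfolding I_def .
qed

lemma subsets_bound:
  assumes "n \<ge> 1"
  shows "card {E. E \<subseteq> {..<n} \<and> card E \<le> k} \<le> (k+1) * n^k"
proof -
  have eq: "{E. E \<subseteq> {..<n} \<and> card E \<le> k} = (\<Union>j\<in>{..k}. {E. E \<subseteq> {..<n} \<and> card E = j})" by auto
  have "card {E. E \<subseteq> {..<n} \<and> card E \<le> k} \<le> (\<Sum>j\<in>{..k}. card {E. E \<subseteq> {..<n} \<and> card E = j})"
    unfolding eq by (rule card_UN_le) simp
  also have "\<dots> = (\<Sum>j\<in>{..k}. n choose j)" by (simp add: n_subsets)
  also have "\<dots> \<le> (\<Sum>j\<in>{..k}. n ^ k)"
  proof (rule sum_mono)
    fix j assume "j \<in> {..k}"
    then have jk: "j \<le> k" by simp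
    have "n choose j \<le> n ^ j"
      by (cases "j \<le> n") (auto simp: binomial_le_pow binomial_eq_0)
    also have "\<dots> \<le> n ^ k" using jk assms by (intro power_increasing) auto
    finally show "n choose j \<le> n ^ k" .
  qed
  also have "\<dots> = (k+1) * n^k" by simp
  finally show ?thesis .
qed

theorem proposition3p4:
  fixes A :: "'a set" and ar :: "'f \<Rightarrow> nat" and op :: "'f \<Rightarrow> 'a list \<Rightarrow> 'a"
    and \<alpha> :: "('a \<times> 'a) set" and a b :: 'a
  assumes "is_algebra A ar op" and "finite A"
    and "is_congruence A ar op \<alpha>" and "strongly_abelian A ar op \<alpha>"
    and "a \<in> A" and "b \<in> A" and "(a, b) \<in> \<alpha>"
  shows "(\<lambda>n. real (card (F_ab ar op a b n)))
           \<in> O(\<lambda>n. real n ^ nat \<lfloor>log 2 (real (card A))\<rfloor>)"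
proof -
  define k where "k = nat \<lfloor>log 2 (real (card A))\<rfloor>"
  have eqv: "equiv A \<alpha>" using assms(3) by (simp add: is_congruence_def)
  have alpha: "(p,q) \<in> \<alpha>" if "p \<in> {a,b}" "q \<in> {a,b}" for p q
  proof -
    have "(a,a) \<in> \<alpha>" "(b,b) \<in> \<alpha>" using eqv assms(5,6) by (auto simp: equiv_def refl_on_def)
    moreover have "(b,a) \<in> \<alpha>" using eqv assms(7) by (auto simp: equiv_def sym_def)
    ultimately show ?thesis using that assms(7) by auto
  qed
  define C where "C = (k+1) * card A ^ (2^k)"
  have bound: "card (F_ab ar op a b n) \<le> C * n ^ k" if "n \<ge> 1" for n
  proof -
    have "card (F_ab ar op a b n) \<le> card {E. E \<subseteq> {..<n} \<and> card E \<le> k} * card A ^ (2^k)"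
      unfolding k_def by (rule count[OF assms(1,2,4) alpha assms(5,6)])
    also have "\<dots> \<le> ((k+1) * n^k) * card A ^ (2^k)"
      using subsets_bound[OF that] by (rule mult_right_mono) simp
    finally show ?thesis by (simp add: C_def algebra_simps)
  qed
  have "eventually (\<lambda>n. norm (real (card (F_ab ar op a b n))) \<le> real C * norm (real n ^ k)) at_top"
    using eventually_ge_at_top[of "1::nat"]
  proof eventually_elim
    case (elim n)
    have "real (card (F_ab ar op a b n)) \<le> real (C * n ^ k)" using bound[OF elim] by linarith
    then show ?case by simp
  qed
  then show ?thesis unfolding k_def by (rule bigoI)
qed

end
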